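(* Fix $r\in[1,2)$ and assume the hypotheses of the context. Then there is a constant $C\ge0$ such that for all $x,y\in H$, $\mu,\beta\in\mathcal P_2(H)$ and $p,p'\in H$, $$|\mathcal H(x,\mu,p)-\mathcal H(x,\mu,p')|\le C(1+|x|+\mathcal M_r^{1/r}(\mu)+|p|+|p'|)|p-p'|,$$ $$|\mathcal H(x,\mu,p)-\mathcal H(y,\beta,p)|\le C(|x-y|+d_r(\mu,\beta))(1+|p|).$$
   Context: $H,\Lambda$ real separable Hilbert spaces ($H$: inner product $\langle\cdot,\cdot\rangle$, norm $|\cdot|$; $\Lambda$: norm $|\cdot|_\Lambda$), $\tilde\Lambda\subset\Lambda$ convex. $B\in L(H)$ self-adjoint strictly positive, $|x|_{-1}^2=\langle Bx,x\rangle$. $\mathcal P_r(H)$, $\mathcal M_r(\mu)=\int|x|^rd\mu$, $d_r$ the $r$-Wasserstein distance; $\mathcal M_{-1,r},d_{-1,r}$ the analogues computed with $|\cdot|_{-1}$. Hypotheses ($C,C_1\ge0$, $C_2,C_3>0$; all $x,y\in H,\mu,\beta\in\mathcal P_2(H),q\in\tilde\Lambda$): $f=f_1+f_2$ with $f_1:H\times\mathcal P_2(H)\to H$, $f_2:H\times\mathcal P_2(H)\times\Lambda\to H$, $\langle f(x,\mu,q)-f(y,\beta,q),B(x-y)\rangle\le C(|x-y|_{-1}^2+d_{-1,r}^2(\mu,\beta))$, $|f_1(x,\mu)-f_1(y,\beta)|+|f_2(x,\mu,q)-f_2(y,\beta,q)|\le C(|x-y|+d_r(\mu,\beta))$, $|f(x,\mu,q)|_{-1}\le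 C(1+|x|_{-1}+\mathcal M_{-1,r}^{1/r}(\mu)+|q|_\Lambda)$, $|f_2(x,\mu,q)|\le C(1+|q|_\Lambda)$; $l=l_1+l_2$ with $l_1:H\times\mathcal P_2(H)\to\mathbb R$, $l_2:H\times\mathcal P_2(H)\times\Lambda\to\mathbb R$ continuous, $|l_1(x,\mu)-l_1(y,\beta)|+|l_2(x,\mu,q)-l_2(y,\beta,q)|\le C(|x-y|_{-1}+d_{-1,r}(\mu,\beta))$, $-C_1+C_2|q|_\Lambda^2\le l_2(x,\mu,q)\le C_1+C_3|q|_\Lambda^2$. Hamiltonian: $\mathcal H(x,\mu,p)=\inf_{q\in\tilde\Lambda}(\langle f(x,\mu,q),p\rangle+l(x,\mu,q))$. *)

theory Defs
  imports "HOL-Probability.Probability"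
begin

text \<open>Real separable Hilbert spaces are rendered as types of class
  real_inner + complete_space + second_countable_topology.\<close>

definition norm_m1 :: "('h::real_inner \<Rightarrow> 'h) \<Rightarrow> 'h \<Rightarrow> real" where
  "norm_m1 B x = sqrt (inner (B x) x)"

definition P2 :: "('h::real_normed_vector) measure set" where
  "P2 = {\<mu>. sets \<mu> = sets borel \<and> prob_space \<mu> \<and>
              (\<integral>\<^sup>+ x. ennreal ((norm x)\<^sup>2) \<partial>\<mu>) < \<infinity>}"

definition moment :: "('h \<Rightarrow> real) \<Rightarrow> real \<Rightarrow> 'h measure \<Rightarrow> real" where
  "moment nm r \<mu> = enn2real (\<integral>\<^sup>+ x. ennreal (nm x powr r) \<partial>\<mu>)"

definition couplings :: "('h::topological_space) measure \<Rightarrow> 'h measure \<Rightarrow> ('h \<times> 'h) measure set" where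
  "couplings \<mu> \<beta> = {\<gamma>. sets \<gamma> = sets borel \<and> prob_space \<gamma> \<and>
                        distr \<gamma> borel fst = \<mu> \<and> distr \<gamma> borel snd = \<beta>}"

definition wass :: "('h::{real_normed_vector} \<Rightarrow> real) \<Rightarrow> real \<Rightarrow> 'h measure \<Rightarrow> 'h measure \<Rightarrow> real" where
  "wass nm r \<mu> \<beta> =
     enn2real (INF \<gamma>\<in>couplings \<mu> \<beta>. \<integral>\<^sup>+ z. ennreal (nm (fst z - snd z) powr r) \<partial>\<gamma>) powr (1 / r)"

abbreviation d_r :: "real \<Rightarrow> ('h::real_normed_vector) measure \<Rightarrow> 'h measure \<Rightarrow> real" where
  "d_r r \<equiv> wass norm r"

definition Ham ::
  "('h::real_inner \<Rightarrow> 'h measure \<Rightarrow> 'h) \<Rightarrow> ('h \<Rightarrow> 'h measure \<Rightarrow> 'l \<Rightarrow> 'h) \<Rightarrow>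
   ('h \<Rightarrow> 'h measure \<Rightarrow> real) \<Rightarrow> ('h \<Rightarrow> 'h measure \<Rightarrow> 'l \<Rightarrow> real) \<Rightarrow> 'l set \<Rightarrow>
   'h \<Rightarrow> 'h measure \<Rightarrow> 'h \<Rightarrow> real" where
  "Ham f1 f2 l1 l2 Lt x \<mu> p =
     Inf ((\<lambda>q. inner (f1 x \<mu> + f2 x \<mu> q) p + (l1 x \<mu> + l2 x \<mu> q)) ` Lt)"

end

theory Submission
  imports Defs
begin


lemma P2_D: "\<mu> \<in> P2 \<Longrightarrow> sets \<mu> = sets borel \<and> prob_space \<mu> \<and> (\<integral>\<^sup>+ x. ennreal ((norm x)\<^sup>2) \<partial>\<mu>) < \<infinity>"
  by (simp add: P2_def)

lemma prod_coupling:
  fixes \<mu> \<beta> :: "'h::{real_normed_vector, second_countable_topology} measure"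
  assumes "\<mu> \<in> P2" "\<beta> \<in> P2"
  shows "\<mu> \<Otimes>\<^sub>M \<beta> \<in> couplings \<mu> \<beta>"
proof -
  have m: "sets \<mu> = sets borel" "prob_space \<mu>" and b: "sets \<beta> = sets borel" "prob_space \<beta>"
    using assms by (auto simp: P2_def)
  interpret pair_prob_space \<mu> \<beta>
    by (simp add: m b pair_prob_space.intro pair_sigma_finite.intro prob_space_imp_sigma_finite)
  have s: "sets (\<mu> \<Otimes>\<^sub>M \<beta>) = sets (borel :: ('h \<times> 'h) measure)"
    using sets_pair_measure_cong[OF m(1) b(1)] borel_prod[where 'a='h and 'b='h] by metis
  have "distr (\<mu> \<Otimes>\<^sub>M \<beta>) borel fst = distr (\<mu> \<Otimes>\<^sub>M \<beta>) \<mu> fst"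
    by (rule distr_cong) (auto simp: m)
  also have "\<dots> = \<mu>" by (rule M2.distr_pair_fst)
  finally have 1: "distr (\<mu> \<Otimes>\<^sub>M \<beta>) borel fst = \<mu>" .
  have "distr (\<mu> \<Otimes>\<^sub>M \<beta>) borel snd = distr (\<mu> \<Otimes>\<^sub>M \<beta>) \<beta> snd"
    by (rule distr_cong) (auto simp: b)
  also have "\<dots> = \<beta>"
  proof (intro measure_eqI)
    fix A assume A: "A \<in> sets (distr (\<mu> \<Otimes>\<^sub>M \<beta>) \<beta> snd)"
    from A have "emeasure (distr (\<mu> \<Otimes>\<^sub>M \<beta>) \<beta> snd) A = emeasure (\<mu> \<Otimes>\<^sub>M \<beta>) (space \<mu> \<times> A)"
      by (auto simp add: emeasure_distr space_pair_measure dest: sets.sets_into_space intro!: arg_cong2[where f=emeasure])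
    also have "\<dots> = emeasure \<mu> (space \<mu>) * emeasure \<beta> A"
      using A by (intro M2.emeasure_pair_measure_Times) auto
    finally show "emeasure (distr (\<mu> \<Otimes>\<^sub>M \<beta>) \<beta> snd) A = emeasure \<beta> A"
      by (simp add: M1.emeasure_space_1)
  qed simp
  finally have 2: "distr (\<mu> \<Otimes>\<^sub>M \<beta>) borel snd = \<beta>" .
  show ?thesis unfolding couplings_def using s 1 2 P.prob_space_axioms by auto
qed

lemma powr_le_1_sq:
  fixes t r :: real assumes "0 \<le> t" "0 \<le> r" "r \<le> 2"
  shows "t powr r \<le> 1 + t\<^sup>2"
proof (cases "t \<le> 1")
  case True
  then have "t powr r \<le> 1"
    using assms by (intro powr_le1) auto
  then show ?thesis using zero_le_power2[of t] by linarith
next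
  case False
  then have "t powr r \<le> t powr 2" using assms by (intro powr_mono) auto
  also have "\<dots> = t\<^sup>2" using False by (simp add: powr_numeral)
  finally show ?thesis by simp
qed

lemma P2_moment_finite:
  fixes \<mu> :: "'h::{real_normed_vector, second_countable_topology} measure"
  assumes "\<mu> \<in> P2" "0 \<le> r" "r \<le> 2"
  shows "(\<integral>\<^sup>+ x. ennreal (norm x powr r) \<partial>\<mu>) < \<infinity>"
proof -
  have m: "sets \<mu> = sets borel" and p: "prob_space \<mu>"
    and f: "(\<integral>\<^sup>+ x. ennreal ((norm x)\<^sup>2) \<partial>\<mu>) < \<infinity>"
    using assms by (auto simp: P2_def)
  interpret prob_space \<mu> by fact
  have nb: "(\<lambda>x::'h. ennreal ((norm x)\<^sup>2)) \<in> borel_measurable borel" by measurable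
  have nm[measurable]: "(\<lambda>x::'h. ennreal ((norm x)\<^sup>2)) \<in> borel_measurable \<mu>"
    using nb measurable_cong_sets[OF m(1) refl] by blast
  have "(\<integral>\<^sup>+ x. ennreal (norm x powr r) \<partial>\<mu>) \<le> (\<integral>\<^sup>+ x. (1 + ennreal ((norm x)\<^sup>2)) \<partial>\<mu>)"
  proof (intro nn_integral_mono)
    fix x :: 'h
    have "ennreal (norm x powr r) \<le> ennreal (1 + (norm x)\<^sup>2)" using assms by (intro ennreal_leI powr_le_1_sq) auto
    also have "\<dots> = 1 + ennreal ((norm x)\<^sup>2)" by (simp add: ennreal_plus)
    finally show "ennreal (norm x powr r) \<le> 1 + ennreal ((norm x)\<^sup>2)" .
  qed
  also have "\<dots> = 1 + (\<integral>\<^sup>+ x. ennreal ((norm x)\<^sup>2) \<partial>\<mu>)"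
    by (subst nn_integral_add) (auto simp: emeasure_space_1 nm)
  also have "\<dots> < \<infinity>" using f by simp
  finally show ?thesis .
qed

lemma prod_cost_finite:
  fixes \<mu> \<beta> :: "'h::{real_normed_vector, second_countable_topology} measure"
  assumes "\<mu> \<in> P2" "\<beta> \<in> P2" "0 \<le> r" "r \<le> 2"
  shows "(\<integral>\<^sup>+ z. ennreal (norm (fst z - snd z) powr r) \<partial>(\<mu> \<Otimes>\<^sub>M \<beta>)) < \<infinity>"
proof -
  have m: "sets \<mu> = sets borel" "prob_space \<mu>"
    and fm: "(\<integral>\<^sup>+ x. ennreal ((norm x)\<^sup>2) \<partial>\<mu>) < \<infinity>"
    and b: "sets \<beta> = sets borel" "prob_space \<beta>"
    and fb: "(\<integral>\<^sup>+ x. ennreal ((norm x)\<^sup>2) \<partial>\<beta>) < \<infinity>"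
    using assms by (auto simp: P2_def)
  interpret pair_prob_space \<mu> \<beta>
    by (simp add: m b pair_prob_space.intro pair_sigma_finite.intro prob_space_imp_sigma_finite)
  have nb: "(\<lambda>x::'h. ennreal ((norm x)\<^sup>2)) \<in> borel_measurable borel" by measurable
  have nm[measurable]: "(\<lambda>x::'h. ennreal ((norm x)\<^sup>2)) \<in> borel_measurable \<mu>"
    using nb measurable_cong_sets[OF m(1) refl] by blast
  have nbb[measurable]: "(\<lambda>x::'h. ennreal ((norm x)\<^sup>2)) \<in> borel_measurable \<beta>"
    using nb measurable_cong_sets[OF b(1) refl] by blast
  have pt: "norm (x - y) powr r \<le> 1 + 2 * (norm x)\<^sup>2 + 2 * (norm y)\<^sup>2" for x y :: 'h
  proof -
    have "norm (x - y) powr r \<le> 1 + (norm (x - y))\<^sup>2" using assms by (intro powr_le_1_sq) auto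
    also have "(norm (x - y)) \<le> norm x + norm y" by (rule norm_triangle_ineq4)
    then have "(norm (x - y))\<^sup>2 \<le> (norm x + norm y)\<^sup>2" by (intro power_mono) auto
    also have "(norm x + norm y)\<^sup>2 \<le> 2 * (norm x)\<^sup>2 + 2 * (norm y)\<^sup>2"
      using zero_le_power2[of "norm x - norm y"] power2_sum[of "norm x" "norm y"] power2_diff[of "norm x" "norm y"]
      by linarith
    finally show ?thesis by simp
  qed
  have "(\<integral>\<^sup>+ z. ennreal (norm (fst z - snd z) powr r) \<partial>(\<mu> \<Otimes>\<^sub>M \<beta>))
      \<le> (\<integral>\<^sup>+ z. (1 + 2 * ennreal ((norm (fst z))\<^sup>2) + 2 * ennreal ((norm (snd z))\<^sup>2)) \<partial>(\<mu> \<Otimes>\<^sub>M \<beta>))"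
  proof (intro nn_integral_mono)
    fix z :: "'h \<times> 'h"
    have "ennreal (norm (fst z - snd z) powr r) \<le> ennreal (1 + 2 * (norm (fst z))\<^sup>2 + 2 * (norm (snd z))\<^sup>2)"
      by (intro ennreal_leI pt)
    also have "\<dots> = 1 + 2 * ennreal ((norm (fst z))\<^sup>2) + 2 * ennreal ((norm (snd z))\<^sup>2)"
      by (simp add: ennreal_plus ennreal_mult)
    finally show "ennreal (norm (fst z - snd z) powr r) \<le> 1 + 2 * ennreal ((norm (fst z))\<^sup>2) + 2 * ennreal ((norm (snd z))\<^sup>2)" .
  qed
  also have "\<dots> = (\<integral>\<^sup>+ x. \<integral>\<^sup>+ y. (1 + 2 * ennreal ((norm x)\<^sup>2) + 2 * ennreal ((norm y)\<^sup>2)) \<partial>\<beta> \<partial>\<mu>)"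
  proof -
    have "(\<lambda>z. (1 + 2 * ennreal ((norm (fst z))\<^sup>2) + 2 * ennreal ((norm (snd z))\<^sup>2))) \<in> borel_measurable (\<mu> \<Otimes>\<^sub>M \<beta>)"
      by measurable
    from M2.nn_integral_fst[OF this] show ?thesis by simp
  qed
  also have "\<dots> = (\<integral>\<^sup>+ x. (1 + 2 * ennreal ((norm x)\<^sup>2) + 2 * (\<integral>\<^sup>+ y. ennreal ((norm y)\<^sup>2) \<partial>\<beta>)) \<partial>\<mu>)"
    by (intro nn_integral_cong, subst nn_integral_add) (auto simp: nn_integral_cmult[OF nbb] M2.emeasure_space_1)
  also have "\<dots> = 1 + 2 * (\<integral>\<^sup>+ x. ennreal ((norm x)\<^sup>2) \<partial>\<mu>) + 2 * (\<integral>\<^sup>+ y. ennreal ((norm y)\<^sup>2) \<partial>\<beta>)"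
  proof -
    let ?c = "(\<integral>\<^sup>+ y. ennreal ((norm y)\<^sup>2) \<partial>\<beta>)"
    have "(\<integral>\<^sup>+ x. (1 + 2 * ennreal ((norm x)\<^sup>2) + 2 * ?c) \<partial>\<mu>)
        = (\<integral>\<^sup>+ x. (1 + 2 * ennreal ((norm x)\<^sup>2)) \<partial>\<mu>) + (\<integral>\<^sup>+ x. 2 * ?c \<partial>\<mu>)"
      by (rule nn_integral_add) auto
    also have "(\<integral>\<^sup>+ x. (1 + 2 * ennreal ((norm x)\<^sup>2)) \<partial>\<mu>) = (\<integral>\<^sup>+ x. 1 \<partial>\<mu>) + (\<integral>\<^sup>+ x. 2 * ennreal ((norm x)\<^sup>2) \<partial>\<mu>)"
      by (rule nn_integral_add) auto
    also have "(\<integral>\<^sup>+ x. 2 * ennreal ((norm x)\<^sup>2) \<partial>\<mu>) = 2 * (\<integral>\<^sup>+ x. ennreal ((norm x)\<^sup>2) \<partial>\<mu>)"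
      by (rule nn_integral_cmult[OF nm])
    finally show ?thesis by (simp add: M1.emeasure_space_1)
  qed
  also have "\<dots> < \<infinity>" using fm fb by (simp add: ennreal_mult_less_top)
  finally show ?thesis .
qed



lemma P2_return0: "return borel (0::'h::{real_normed_vector, second_countable_topology}) \<in> P2"
  unfolding P2_def by (auto intro!: prob_space_return simp: nn_integral_return)

lemma d_r_return_le:
  fixes \<mu> :: "'h::{real_normed_vector, second_countable_topology} measure"
  assumes mu: "\<mu> \<in> P2" and r: "0 < r" "r \<le> 2"
  shows "d_r r \<mu> (return borel 0) \<le> moment norm r \<mu> powr (1/r)"
proof -
  let ?d = "return borel (0::'h)"
  let ?I = "\<lambda>\<gamma>. \<integral>\<^sup>+ z. ennreal (norm (fst z - snd z) powr r) \<partial>\<gamma>"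
  have d: "?d \<in> P2" by (rule P2_return0)
  have cpl: "\<mu> \<Otimes>\<^sub>M ?d \<in> couplings \<mu> ?d" by (rule prod_coupling[OF mu d])
  have m: "sets \<mu> = sets borel" "prob_space \<mu>" using mu by (auto simp: P2_def)
  interpret pair_prob_space \<mu> ?d
    by (simp add: m pair_prob_space.intro pair_sigma_finite.intro prob_space_imp_sigma_finite prob_space_return)
  have sb: "sets (\<mu> \<Otimes>\<^sub>M ?d) = sets borel" using cpl by (simp add: couplings_def)
  have fb: "(\<lambda>z::'h\<times>'h. ennreal (norm (fst z - snd z) powr r)) \<in> borel_measurable borel"
  proof -
    have d: "(\<lambda>z::'h\<times>'h. fst z - snd z) \<in> borel_measurable borel"
      by (intro borel_measurable_continuous_onI continuous_intros)
    have e: "(\<lambda>w::'h. ennreal (norm w powr r)) \<in> borel_measurable borel" by measurable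
    from measurable_compose[OF d e] show ?thesis by simp
  qed
  have fm: "(\<lambda>z::'h\<times>'h. ennreal (norm (fst z - snd z) powr r)) \<in> borel_measurable (\<mu> \<Otimes>\<^sub>M ?d)"
    using fb measurable_cong_sets[OF sb refl] by blast
  have "?I (\<mu> \<Otimes>\<^sub>M ?d) = (\<integral>\<^sup>+ x. \<integral>\<^sup>+ y. ennreal (norm (x - y) powr r) \<partial>?d \<partial>\<mu>)"
    using M2.nn_integral_fst[OF fm] by simp
  also have "\<dots> = (\<integral>\<^sup>+ x. ennreal (norm x powr r) \<partial>\<mu>)"
  proof (rule nn_integral_cong)
    fix x :: 'h
    have "(\<lambda>y::'h. ennreal (norm (x - y) powr r)) \<in> borel_measurable borel" by measurable
    then show "(\<integral>\<^sup>+ y. ennreal (norm (x - y) powr r) \<partial>?d) = ennreal (norm x powr r)"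
      by (subst nn_integral_return) auto
  qed
  finally have eq: "?I (\<mu> \<Otimes>\<^sub>M ?d) = (\<integral>\<^sup>+ x. ennreal (norm x powr r) \<partial>\<mu>)" .
  have fin: "(\<integral>\<^sup>+ x. ennreal (norm x powr r) \<partial>\<mu>) < \<infinity>" using P2_moment_finite[OF mu] r by auto
  have "(INF \<gamma>\<in>couplings \<mu> ?d. ?I \<gamma>) \<le> ?I (\<mu> \<Otimes>\<^sub>M ?d)" by (rule INF_lower[OF cpl])
  then have "enn2real (INF \<gamma>\<in>couplings \<mu> ?d. ?I \<gamma>) \<le> moment norm r \<mu>"
    unfolding moment_def using eq fin by (intro enn2real_mono) auto
  then show ?thesis unfolding wass_def using r by (intro powr_mono2) auto
qed

lemma wass_le_scaled:
  fixes \<mu> \<beta> :: "'h::{real_normed_vector, second_countable_topology} measure"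
    and nm :: "'h \<Rightarrow> real"
  assumes mu: "\<mu> \<in> P2" and be: "\<beta> \<in> P2" and r: "0 < r" "r \<le> 2" and a: "0 \<le> a"
    and nm: "\<And>z. 0 \<le> nm z \<and> nm z \<le> a * norm z"
  shows "wass nm r \<mu> \<beta> \<le> a * d_r r \<mu> \<beta>"
proof -
  let ?S = "couplings \<mu> \<beta>"
  let ?I = "\<lambda>\<gamma>. \<integral>\<^sup>+ z. ennreal (norm (fst z - snd z) powr r) \<partial>\<gamma>"
  let ?J = "\<lambda>\<gamma>. \<integral>\<^sup>+ z. ennreal (nm (fst z - snd z) powr r) \<partial>\<gamma>"
  define c where "c = ennreal (a powr r)"
  have cpl: "\<mu> \<Otimes>\<^sub>M \<beta> \<in> ?S" by (rule prod_coupling[OF mu be])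
  have fb: "(\<lambda>z::'h\<times>'h. ennreal (norm (fst z - snd z) powr r)) \<in> borel_measurable borel"
  proof -
    have d: "(\<lambda>z::'h\<times>'h. fst z - snd z) \<in> borel_measurable borel"
      by (intro borel_measurable_continuous_onI continuous_intros)
    have e: "(\<lambda>w::'h. ennreal (norm w powr r)) \<in> borel_measurable borel" by measurable
    from measurable_compose[OF d e] show ?thesis by simp
  qed
  have JI: "?J \<gamma> \<le> c * ?I \<gamma>" if g: "\<gamma> \<in> ?S" for \<gamma>
  proof -
    have sb: "sets \<gamma> = sets borel" using g by (simp add: couplings_def)
    have fm: "(\<lambda>z::'h\<times>'h. ennreal (norm (fst z - snd z) powr r)) \<in> borel_measurable \<gamma>"
      using fb measurable_cong_sets[OF sb refl] by blast
    have "?J \<gamma> \<le> (\<integral>\<^sup>+ z. c * ennreal (norm (fst z - snd z) powr r) \<partial>\<gamma>)"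
    proof (rule nn_integral_mono)
      fix z :: "'h \<times> 'h"
      let ?w = "fst z - snd z"
      have "nm ?w powr r \<le> (a * norm ?w) powr r" using nm[of ?w] r by (intro powr_mono2) auto
      also have "\<dots> = a powr r * norm ?w powr r" by (rule powr_mult)
      finally have "ennreal (nm ?w powr r) \<le> ennreal (a powr r * norm ?w powr r)" by (rule ennreal_leI)
      also have "\<dots> = c * ennreal (norm ?w powr r)" unfolding c_def by (simp add: ennreal_mult)
      finally show "ennreal (nm ?w powr r) \<le> c * ennreal (norm ?w powr r)" .
    qed
    also have "\<dots> = c * ?I \<gamma>" by (rule nn_integral_cmult[OF fm])
    finally show ?thesis .
  qed
  have ctop: "c < top" unfolding c_def by simp
  have "(INF \<gamma>\<in>?S. ?J \<gamma>) \<le> (INF \<gamma>\<in>?S. c * ?I \<gamma>)"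
    using JI by (intro INF_mono) auto
  also have "(INF \<gamma>\<in>?S. c * ?I \<gamma>) = c * (INF \<gamma>\<in>?S. ?I \<gamma>)"
  proof -
    have "(\<lambda>x. c * x) (Inf (?I ` ?S)) = (INF s\<in>?I ` ?S. c * s)"
    proof (rule continuous_at_Inf_mono)
      show "mono (\<lambda>x::ennreal. c * x)" by (auto simp: mono_def mult_left_mono)
      show "continuous (at_right (Inf (?I ` ?S))) (\<lambda>x. c * x)"
        unfolding continuous_within by (intro ennreal_tendsto_cmult[OF ctop] tendsto_ident_at)
      show "?I ` ?S \<noteq> {}" using cpl by blast
      show "bdd_below (?I ` ?S)" by simp
    qed
    then show ?thesis by (simp add: image_comp)
  qed
  finally have le: "(INF \<gamma>\<in>?S. ?J \<gamma>) \<le> c * (INF \<gamma>\<in>?S. ?I \<gamma>)" .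
  have "(INF \<gamma>\<in>?S. ?I \<gamma>) \<le> ?I (\<mu> \<Otimes>\<^sub>M \<beta>)" by (rule INF_lower[OF cpl])
  also have "\<dots> < \<infinity>" using prod_cost_finite[OF mu be] r by auto
  finally have fin: "(INF \<gamma>\<in>?S. ?I \<gamma>) < \<infinity>" .
  have "enn2real (INF \<gamma>\<in>?S. ?J \<gamma>) \<le> enn2real (c * (INF \<gamma>\<in>?S. ?I \<gamma>))"
    using le fin ctop by (intro enn2real_mono) (auto simp: ennreal_mult_less_top)
  also have "\<dots> = a powr r * enn2real (INF \<gamma>\<in>?S. ?I \<gamma>)"
    unfolding c_def by (simp add: enn2real_mult)
  finally have le2: "enn2real (INF \<gamma>\<in>?S. ?J \<gamma>) \<le> a powr r * enn2real (INF \<gamma>\<in>?S. ?I \<gamma>)" .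
  have "wass nm r \<mu> \<beta> \<le> (a powr r * enn2real (INF \<gamma>\<in>?S. ?I \<gamma>)) powr (1/r)"
    unfolding wass_def using r le2 by (intro powr_mono2) auto
  also have "\<dots> = (a powr r) powr (1/r) * enn2real (INF \<gamma>\<in>?S. ?I \<gamma>) powr (1/r)"
    by (rule powr_mult)
  also have "(a powr r) powr (1/r) = a"
    using r a by (simp add: powr_powr)
  finally show ?thesis unfolding wass_def by simp
qed



lemma quad_bound:
  fixes C2 C E D P t :: real
  assumes "C2 > 0" "C \<ge> 0" "E \<ge> 0" "D \<ge> 0" "P \<ge> 0" "t \<ge> 0"
    and h: "C2 * t\<^sup>2 \<le> C * t * P + E * P + D"
  shows "t \<le> ((C + E + D) / C2 + 1) * (1 + P)"
proof (rule ccontr)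
  define A where "A = (C + E + D) / C2 + 1"
  assume "\<not> t \<le> ((C + E + D) / C2 + 1) * (1 + P)"
  then have tA: "A * (1 + P) < t" unfolding A_def by simp
  have A1: "A \<ge> 1" unfolding A_def using assms by simp
  have "1 + P \<le> A * (1 + P)" using mult_right_mono[OF A1, of "1+P"] assms by simp
  then have t1: "1 + P < t" using tA by linarith
  have C2A: "C2 * A = C + E + D + C2" unfolding A_def using assms by (simp add: field_simps)
  have "C2 * t * (A * (1 + P)) < C2 * t * t"
    using tA assms t1 by (intro mult_strict_left_mono) auto
  moreover have "C2 * t * (A * (1 + P)) = (C2 * A) * (1 + P) * t" by (simp only: mult_ac)
  moreover have "(C2 * A) * (1 + P) * t = (C + E + D + C2) * (1 + P) * t" using C2A by simp
  moreover have "(C + E + D + C2) * (1 + P) * t = C*t + C*t*P + E*t + D*t + E*P*t + D*P*t + C2*t + C2*P*t"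
    by (simp add: algebra_simps)
  moreover have "E + E*P + D + D*P \<le> E*t + D*t"
  proof -
    have "(E + D) * (1 + P) \<le> (E + D) * t" using t1 assms by (intro mult_left_mono) auto
    then show ?thesis by (simp add: algebra_simps)
  qed
  moreover have "0 \<le> C*t" "0 \<le> E*P*t" "0 \<le> D*P*t" "0 \<le> C2*t" "0 \<le> C2*P*t" "0 \<le> D*P" using assms by auto
  ultimately have "C * t * P + E * P + D < C2 * t * t" using assms by linarith
  with h show False by (simp add: power2_eq_square mult.assoc)
qed

lemma quad_low:
  fixes C2 C P t :: real
  assumes "C2 > 0"
  shows "C * t * P \<le> C2 * t\<^sup>2 + C\<^sup>2 * P\<^sup>2 / (4 * C2)"
proof -
  have "0 \<le> (2 * C2 * t - C * P)\<^sup>2 / (4 * C2)" using assms by simp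
  also have "(2 * C2 * t - C * P)\<^sup>2 / (4 * C2) = C2 * t\<^sup>2 + C\<^sup>2 * P\<^sup>2 / (4 * C2) - C * t * P"
    using assms by (simp add: field_simps power2_eq_square)
  finally show ?thesis by simp
qed

theorem lemma4p10:
  fixes B :: "'h::{real_inner, complete_space, second_countable_topology} \<Rightarrow> 'h"
    and Lt :: "'l::{real_inner, complete_space, second_countable_topology} set"
    and f1 :: "'h \<Rightarrow> 'h measure \<Rightarrow> 'h"
    and f2 :: "'h \<Rightarrow> 'h measure \<Rightarrow> 'l \<Rightarrow> 'h"
    and l1 :: "'h \<Rightarrow> 'h measure \<Rightarrow> real"
    and l2 :: "'h \<Rightarrow> 'h measure \<Rightarrow> 'l \<Rightarrow> real"
    and r C C1 C2 C3 :: real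
  assumes r: "1 \<le> r" "r < 2"
    and Lt: "convex Lt" "Lt \<noteq> {}"
    and B_lin: "bounded_linear B"
    and B_sym: "\<And>x y. inner (B x) y = inner x (B y)"
    and B_pos: "\<And>x. x \<noteq> 0 \<Longrightarrow> inner (B x) x > 0"
    and Cpos: "C \<ge> 0" "C1 \<ge> 0" "C2 > 0" "C3 > 0"
    and f_mono: "\<And>x y \<mu> \<beta> q. \<mu> \<in> P2 \<Longrightarrow> \<beta> \<in> P2 \<Longrightarrow> q \<in> Lt \<Longrightarrow>
        inner ((f1 x \<mu> + f2 x \<mu> q) - (f1 y \<beta> + f2 y \<beta> q)) (B (x - y))
          \<le> C * ((norm_m1 B (x - y))\<^sup>2 + (wass (norm_m1 B) r \<mu> \<beta>)\<^sup>2)"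
    and f_lip: "\<And>x y \<mu> \<beta> q. \<mu> \<in> P2 \<Longrightarrow> \<beta> \<in> P2 \<Longrightarrow> q \<in> Lt \<Longrightarrow>
        norm (f1 x \<mu> - f1 y \<beta>) + norm (f2 x \<mu> q - f2 y \<beta> q)
          \<le> C * (norm (x - y) + d_r r \<mu> \<beta>)"
    and f_growth: "\<And>x \<mu> q. \<mu> \<in> P2 \<Longrightarrow> q \<in> Lt \<Longrightarrow>
        norm_m1 B (f1 x \<mu> + f2 x \<mu> q)
          \<le> C * (1 + norm_m1 B x + moment (norm_m1 B) r \<mu> powr (1 / r) + norm q)"
    and f2_bound: "\<And>x \<mu> q. \<mu> \<in> P2 \<Longrightarrow> q \<in> Lt \<Longrightarrow> norm (f2 x \<mu> q) \<le> C * (1 + norm q)"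
    and l1_cont: "\<And>xs x \<mu>s \<mu>. (\<forall>n. \<mu>s n \<in> P2) \<Longrightarrow> \<mu> \<in> P2 \<Longrightarrow> xs \<longlonglongrightarrow> x \<Longrightarrow>
        (\<lambda>n. d_r 2 (\<mu>s n) \<mu>) \<longlonglongrightarrow> 0 \<Longrightarrow> (\<lambda>n. l1 (xs n) (\<mu>s n)) \<longlonglongrightarrow> l1 x \<mu>"
    and l2_cont: "\<And>xs x \<mu>s \<mu> qs q. (\<forall>n. \<mu>s n \<in> P2) \<Longrightarrow> \<mu> \<in> P2 \<Longrightarrow> xs \<longlonglongrightarrow> x \<Longrightarrow>
        (\<lambda>n. d_r 2 (\<mu>s n) \<mu>) \<longlonglongrightarrow> 0 \<Longrightarrow> qs \<longlonglongrightarrow> q \<Longrightarrow>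
        (\<lambda>n. l2 (xs n) (\<mu>s n) (qs n)) \<longlonglongrightarrow> l2 x \<mu> q"
    and l_lip: "\<And>x y \<mu> \<beta> q. \<mu> \<in> P2 \<Longrightarrow> \<beta> \<in> P2 \<Longrightarrow> q \<in> Lt \<Longrightarrow>
        \<bar>l1 x \<mu> - l1 y \<beta>\<bar> + \<bar>l2 x \<mu> q - l2 y \<beta> q\<bar>
          \<le> C * (norm_m1 B (x - y) + wass (norm_m1 B) r \<mu> \<beta>)"
    and l2_bounds: "\<And>x \<mu> q. \<mu> \<in> P2 \<Longrightarrow> q \<in> Lt \<Longrightarrow>
        - C1 + C2 * (norm q)\<^sup>2 \<le> l2 x \<mu> q \<and> l2 x \<mu> q \<le> C1 + C3 * (norm q)\<^sup>2"
  shows "\<exists>K\<ge>0.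
     (\<forall>x \<mu> p p'. \<mu> \<in> P2 \<longrightarrow>
        \<bar>Ham f1 f2 l1 l2 Lt x \<mu> p - Ham f1 f2 l1 l2 Lt x \<mu> p'\<bar>
          \<le> K * (1 + norm x + moment norm r \<mu> powr (1 / r) + norm p + norm p') * norm (p - p')) \<and>
     (\<forall>x y \<mu> \<beta> p. \<mu> \<in> P2 \<longrightarrow> \<beta> \<in> P2 \<longrightarrow>
        \<bar>Ham f1 f2 l1 l2 Lt x \<mu> p - Ham f1 f2 l1 l2 Lt y \<beta> p\<bar>
          \<le> K * (norm (x - y) + d_r r \<mu> \<beta>) * (1 + norm p))"
proof -
  obtain q0 where q0: "q0 \<in> Lt" using Lt(2) by blast
  obtain bB where bB: "bB > 0" "\<And>x. norm (B x) \<le> norm x * bB"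
    using bounded_linear.pos_bounded[OF B_lin] by blast
  have Bnn: "0 \<le> inner (B z) z" for z
  proof (cases "z = 0")
    case True then show ?thesis by simp
  next
    case False then show ?thesis using B_pos[of z] by simp
  qed
  have nmB: "0 \<le> norm_m1 B z \<and> norm_m1 B z \<le> sqrt bB * norm z" for z
  proof -
    have "inner (B z) z \<le> norm (B z) * norm z" by (rule norm_cauchy_schwarz)
    also have "\<dots> \<le> norm z * bB * norm z" using bB(2)[of z] by (intro mult_right_mono) auto
    finally have "inner (B z) z \<le> bB * (norm z)\<^sup>2" by (simp add: power2_eq_square algebra_simps)
    then have "sqrt (inner (B z) z) \<le> sqrt (bB * (norm z)\<^sup>2)" by (rule real_sqrt_le_mono)
    also have "\<dots> = sqrt bB * norm z" by (simp add: real_sqrt_mult)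
    finally show ?thesis unfolding norm_m1_def using Bnn[of z] by simp
  qed
  have rpos: "0 < r" "r \<le> 2" using r by auto
  define g where "g x \<mu> p q = inner (f1 x \<mu> + f2 x \<mu> q) p + (l1 x \<mu> + l2 x \<mu> q)" for x \<mu> p q
  have Ham_eq: "Ham f1 f2 l1 l2 Lt x \<mu> p = Inf (g x \<mu> p ` Lt)" for x \<mu> p
    by (simp add: Ham_def g_def)
  have glow: "inner (f1 x \<mu>) p + l1 x \<mu> - C1 - C * norm p - C * norm q * norm p + C2 * (norm q)\<^sup>2 \<le> g x \<mu> p q"
    if "\<mu> \<in> P2" "q \<in> Lt" for x \<mu> p q
  proof -
    have "- (norm (f2 x \<mu> q) * norm p) \<le> inner (f2 x \<mu> q) p" using Cauchy_Schwarz_ineq2[of "f2 x \<mu> q" p] by linarith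
    moreover have "norm (f2 x \<mu> q) * norm p \<le> C * (1 + norm q) * norm p"
      using f2_bound[OF that] by (intro mult_right_mono) auto
    moreover have "- C1 + C2 * (norm q)\<^sup>2 \<le> l2 x \<mu> q" using l2_bounds[OF that] by simp
    ultimately show ?thesis unfolding g_def by (simp add: inner_add_left algebra_simps)
  qed
  have gup: "g x \<mu> p q \<le> inner (f1 x \<mu>) p + l1 x \<mu> + C1 + C * (1 + norm q) * norm p + C3 * (norm q)\<^sup>2"
    if "\<mu> \<in> P2" "q \<in> Lt" for x \<mu> p q
  proof -
    have "inner (f2 x \<mu> q) p \<le> norm (f2 x \<mu> q) * norm p" using Cauchy_Schwarz_ineq2[of "f2 x \<mu> q" p] by linarith
    moreover have "norm (f2 x \<mu> q) * norm p \<le> C * (1 + norm q) * norm p"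
      using f2_bound[OF that] by (intro mult_right_mono) auto
    moreover have "l2 x \<mu> q \<le> C1 + C3 * (norm q)\<^sup>2" using l2_bounds[OF that] by simp
    ultimately show ?thesis unfolding g_def by (simp add: inner_add_left algebra_simps)
  qed
  have bdd: "bdd_below (g x \<mu> p ` Lt)" if "\<mu> \<in> P2" for x \<mu> p
  proof (rule bdd_belowI2)
    fix q assume q: "q \<in> Lt"
    have "C * norm q * norm p \<le> C2 * (norm q)\<^sup>2 + C\<^sup>2 * (norm p)\<^sup>2 / (4 * C2)"
      using quad_low[OF Cpos(3)] .
    with glow[OF that q, of x p]
    show "inner (f1 x \<mu>) p + l1 x \<mu> - C1 - C * norm p - C\<^sup>2 * (norm p)\<^sup>2 / (4 * C2) \<le> g x \<mu> p q"
      by linarith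
  qed
  have Hle: "Ham f1 f2 l1 l2 Lt x \<mu> p \<le> g x \<mu> p q" if "\<mu> \<in> P2" "q \<in> Lt" for x \<mu> p q
    unfolding Ham_eq using bdd[OF that(1)] that(2) by (intro cInf_lower) auto
  define D where "D = 2 * C1 + C3 * (norm q0)\<^sup>2 + 1"
  define E where "E = C * (2 + norm q0)"
  define A where "A = (C + E + D) / C2 + 1"
  have A1: "A \<ge> 1" unfolding A_def D_def E_def using Cpos by simp
  have qbound: "norm q \<le> A * (1 + norm p)"
    if "\<mu> \<in> P2" "q \<in> Lt" "g x \<mu> p q \<le> g x \<mu> p q0 + 1" for x \<mu> p q
  proof -
    have "C2 * (norm q)\<^sup>2 \<le> C * norm q * norm p + E * norm p + D"
      using glow[OF that(1,2), of x p] gup[OF that(1) q0, of x p] that(3)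
      unfolding D_def E_def by (simp add: algebra_simps)
    then show ?thesis unfolding A_def
      using Cpos D_def E_def by (intro quad_bound) auto
  qed
  define F0 where "F0 = norm (f1 0 (return borel 0))"
  have f1b: "norm (f1 x \<mu>) \<le> F0 + C * norm x + C * moment norm r \<mu> powr (1 / r)" if "\<mu> \<in> P2" for x \<mu>
  proof -
    have "norm (f1 x \<mu> - f1 0 (return borel 0)) \<le> C * (norm (x - 0) + d_r r \<mu> (return borel 0))"
      using f_lip[OF that P2_return0 q0, of x 0] norm_ge_zero[of "f2 x \<mu> q0 - f2 0 (return borel 0) q0"] by linarith
    also have "\<dots> \<le> C * (norm x + moment norm r \<mu> powr (1 / r))"
      using d_r_return_le[OF that rpos] Cpos by (intro mult_left_mono) auto
    finally show ?thesis unfolding F0_def using norm_triangle_ineq2[of "f1 x \<mu>" "f1 0 (return borel 0)"]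
      by (simp add: algebra_simps)
  qed
  have dir1: "Ham f1 f2 l1 l2 Lt x \<mu> p \<le> Ham f1 f2 l1 l2 Lt x \<mu> p' + (norm (f1 x \<mu>) + C * (1 + A * (1 + norm p'))) * norm (p - p')"
    if mu: "\<mu> \<in> P2" for x \<mu> p p'
  proof (rule field_le_epsilon)
    fix e :: real assume e: "0 < e"
    define \<epsilon> where "\<epsilon> = min e 1"
    have eps: "0 < \<epsilon>" "\<epsilon> \<le> 1" "\<epsilon> \<le> e" using e by (auto simp: \<epsilon>_def)
    have "Inf (g x \<mu> p' ` Lt) < Inf (g x \<mu> p' ` Lt) + \<epsilon>" using eps by simp
    then obtain q where q: "q \<in> Lt" "g x \<mu> p' q < Ham f1 f2 l1 l2 Lt x \<mu> p' + \<epsilon>"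
      using cInf_lessD[of "g x \<mu> p' ` Lt"] Lt(2) unfolding Ham_eq by blast
    have "g x \<mu> p' q \<le> g x \<mu> p' q0 + 1" using q Hle[OF mu q0, of x p'] eps by linarith
    then have nq: "norm q \<le> A * (1 + norm p')" by (rule qbound[OF mu q(1)])
    have "g x \<mu> p q - g x \<mu> p' q = inner (f1 x \<mu> + f2 x \<mu> q) (p - p')"
      unfolding g_def by (simp add: inner_diff_right)
    also have "\<dots> \<le> norm (f1 x \<mu> + f2 x \<mu> q) * norm (p - p')" by (rule norm_cauchy_schwarz)
    also have "\<dots> \<le> (norm (f1 x \<mu>) + C * (1 + A * (1 + norm p'))) * norm (p - p')"
    proof (intro mult_right_mono)
      have "norm (f1 x \<mu> + f2 x \<mu> q) \<le> norm (f1 x \<mu>) + norm (f2 x \<mu> q)" by (rule norm_triangle_ineq)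
      also have "\<dots> \<le> norm (f1 x \<mu>) + C * (1 + norm q)" using f2_bound[OF mu q(1)] by simp
      also have "\<dots> \<le> norm (f1 x \<mu>) + C * (1 + A * (1 + norm p'))" using nq Cpos by (intro add_left_mono mult_left_mono) auto
      finally show "norm (f1 x \<mu> + f2 x \<mu> q) \<le> norm (f1 x \<mu>) + C * (1 + A * (1 + norm p'))" .
    qed simp
    finally have "g x \<mu> p q \<le> g x \<mu> p' q + (norm (f1 x \<mu>) + C * (1 + A * (1 + norm p'))) * norm (p - p')" by simp
    with Hle[OF mu q(1), of x p] q(2) eps
    show "Ham f1 f2 l1 l2 Lt x \<mu> p \<le> Ham f1 f2 l1 l2 Lt x \<mu> p' + (norm (f1 x \<mu>) + C * (1 + A * (1 + norm p'))) * norm (p - p') + e"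
      by linarith
  qed
  define K1 where "K1 = F0 + 2 * C + C * A"
  define K2 where "K2 = C * (1 + sqrt bB)"
  have K1: "K1 \<ge> 0" "C \<le> K1" "C * A \<le> K1" "F0 + C + C * A \<le> K1" unfolding K1_def F0_def using Cpos A1 by auto
  have K2: "K2 \<ge> 0" unfolding K2_def using Cpos bB by auto
  have Mb: "norm (f1 x \<mu>) + C * (1 + A * (1 + norm p')) \<le> K1 * (1 + norm x + moment norm r \<mu> powr (1 / r) + norm p + norm p')"
    if "\<mu> \<in> P2" for x \<mu> p p'
  proof -
    let ?m = "moment norm r \<mu> powr (1 / r)"
    have "C * norm x \<le> K1 * norm x" "C * ?m \<le> K1 * ?m" "C * A * norm p' \<le> K1 * norm p'" "0 \<le> K1 * norm p"
      using K1 by (auto intro: mult_right_mono)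
    then show ?thesis using f1b[OF that, of x] K1(4) by (simp add: algebra_simps)
  qed
  have dir2: "\<bar>g x \<mu> p q - g y \<beta> p q\<bar> \<le> C * (norm (x - y) + d_r r \<mu> \<beta>) * norm p + C * (sqrt bB * norm (x - y) + sqrt bB * d_r r \<mu> \<beta>)"
    if mu: "\<mu> \<in> P2" and be: "\<beta> \<in> P2" and q: "q \<in> Lt" for x y \<mu> \<beta> p q
  proof -
    have "g x \<mu> p q - g y \<beta> p q = inner ((f1 x \<mu> - f1 y \<beta>) + (f2 x \<mu> q - f2 y \<beta> q)) p + ((l1 x \<mu> - l1 y \<beta>) + (l2 x \<mu> q - l2 y \<beta> q))"
      unfolding g_def by (simp add: inner_diff_left inner_add_left algebra_simps)
    moreover have "\<bar>inner ((f1 x \<mu> - f1 y \<beta>) + (f2 x \<mu> q - f2 y \<beta> q)) p\<bar> \<le> C * (norm (x - y) + d_r r \<mu> \<beta>) * norm p"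
    proof -
      have "\<bar>inner ((f1 x \<mu> - f1 y \<beta>) + (f2 x \<mu> q - f2 y \<beta> q)) p\<bar> \<le> norm ((f1 x \<mu> - f1 y \<beta>) + (f2 x \<mu> q - f2 y \<beta> q)) * norm p"
        by (rule Cauchy_Schwarz_ineq2)
      also have "\<dots> \<le> C * (norm (x - y) + d_r r \<mu> \<beta>) * norm p"
        using norm_triangle_ineq[of "f1 x \<mu> - f1 y \<beta>" "f2 x \<mu> q - f2 y \<beta> q"] f_lip[OF mu be q, of x y]
        by (intro mult_right_mono) auto
      finally show ?thesis .
    qed
    moreover have "\<bar>l1 x \<mu> - l1 y \<beta>\<bar> + \<bar>l2 x \<mu> q - l2 y \<beta> q\<bar> \<le> C * (sqrt bB * norm (x - y) + sqrt bB * d_r r \<mu> \<beta>)"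
    proof -
      have "wass (norm_m1 B) r \<mu> \<beta> \<le> sqrt bB * d_r r \<mu> \<beta>"
        using wass_le_scaled[OF mu be rpos, of "sqrt bB" "norm_m1 B"] nmB bB(1) by auto
      moreover have "norm_m1 B (x - y) \<le> sqrt bB * norm (x - y)" using nmB bB(1) by auto
      ultimately have "C * (norm_m1 B (x - y) + wass (norm_m1 B) r \<mu> \<beta>) \<le> C * (sqrt bB * norm (x - y) + sqrt bB * d_r r \<mu> \<beta>)"
        using Cpos by (intro mult_left_mono) auto
      with l_lip[OF mu be q, of x y] show ?thesis by linarith
    qed
    ultimately show ?thesis by linarith
  qed
  show ?thesis
  proof (intro exI[of _ "K1 + K2"] conjI allI impI)
    show "0 \<le> K1 + K2" using K1 K2 by simp
  next
    fix x p p' :: 'h and \<mu> :: "'h measure" assume mu: "\<mu> \<in> P2"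
    let ?S = "1 + norm x + moment norm r \<mu> powr (1 / r) + norm p + norm p'"
    have S: "?S \<ge> 0" by simp
    have a: "Ham f1 f2 l1 l2 Lt x \<mu> p - Ham f1 f2 l1 l2 Lt x \<mu> p' \<le> K1 * ?S * norm (p - p')"
      using dir1[OF mu, of x p p'] Mb[OF mu, of x p' p] mult_right_mono[OF Mb[OF mu, of x p' p] norm_ge_zero[of "p - p'"]]
      by linarith
    have b: "Ham f1 f2 l1 l2 Lt x \<mu> p' - Ham f1 f2 l1 l2 Lt x \<mu> p \<le> K1 * ?S * norm (p - p')"
    proof -
      have "norm (f1 x \<mu>) + C * (1 + A * (1 + norm p)) \<le> K1 * ?S"
        using Mb[OF mu, of x p p'] by (simp add: algebra_simps)
      from mult_right_mono[OF this norm_ge_zero[of "p' - p"]] dir1[OF mu, of x p' p]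
      show ?thesis by (simp add: norm_minus_commute)
    qed
    have "K1 * ?S * norm (p - p') \<le> (K1 + K2) * ?S * norm (p - p')"
      using K2 S by (intro mult_right_mono) auto
    with a b show "\<bar>Ham f1 f2 l1 l2 Lt x \<mu> p - Ham f1 f2 l1 l2 Lt x \<mu> p'\<bar> \<le> (K1 + K2) * ?S * norm (p - p')"
      by linarith
  next
    fix x y p :: 'h and \<mu> \<beta> :: "'h measure" assume mu: "\<mu> \<in> P2" and be: "\<beta> \<in> P2"
    let ?n = "norm (x - y)" and ?d = "d_r r \<mu> \<beta>"
    let ?\<Delta> = "C * (?n + ?d) * norm p + C * (sqrt bB * ?n + sqrt bB * ?d)"
    have dpos: "?d \<ge> 0" by (simp add: wass_def)
    have h1: "Ham f1 f2 l1 l2 Lt x \<mu> p - ?\<Delta> \<le> Ham f1 f2 l1 l2 Lt y \<beta> p"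
      unfolding Ham_eq[of y \<beta> p]
    proof (rule cInf_greatest)
      show "g y \<beta> p ` Lt \<noteq> {}" using Lt(2) by simp
      fix v assume "v \<in> g y \<beta> p ` Lt"
      then obtain q where q: "q \<in> Lt" "v = g y \<beta> p q" by auto
      show "Ham f1 f2 l1 l2 Lt x \<mu> p - ?\<Delta> \<le> v"
        using Hle[OF mu q(1), of x p] dir2[OF mu be q(1), of x p y] q(2) by linarith
    qed
    have h2: "Ham f1 f2 l1 l2 Lt y \<beta> p - ?\<Delta> \<le> Ham f1 f2 l1 l2 Lt x \<mu> p"
      unfolding Ham_eq[of x \<mu> p]
    proof (rule cInf_greatest)
      show "g x \<mu> p ` Lt \<noteq> {}" using Lt(2) by simp
      fix v assume "v \<in> g x \<mu> p ` Lt"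
      then obtain q where q: "q \<in> Lt" "v = g x \<mu> p q" by auto
      show "Ham f1 f2 l1 l2 Lt y \<beta> p - ?\<Delta> \<le> v"
        using Hle[OF be q(1), of y p] dir2[OF mu be q(1), of x p y] q(2) by linarith
    qed
    have "?\<Delta> \<le> K2 * (?n + ?d) * (1 + norm p)"
    proof -
      have "0 \<le> C * (?n + ?d)" "0 \<le> C * sqrt bB * (?n + ?d) * norm p" using Cpos dpos bB by auto
      then show ?thesis unfolding K2_def by (simp add: algebra_simps)
    qed
    also have "\<dots> \<le> (K1 + K2) * (?n + ?d) * (1 + norm p)"
      using K1 dpos by (intro mult_right_mono) auto
    finally show "\<bar>Ham f1 f2 l1 l2 Lt x \<mu> p - Ham f1 f2 l1 l2 Lt y \<beta> p\<bar> \<le> (K1 + K2) * (?n + ?d) * (1 + norm p)"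
      using h1 h2 by linarith
  qed
qed

end
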